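(* Let $\mathcal{A}$ be an arrangement of distinct lines in $\mathbb{P}^2_{\mathbb{C}}$ such that $|\operatorname{mult}(\mathcal{A})\cap H|\le 2$ for every $H\in\mathcal{A}$. Then $\mathcal{A}$ is inductively connected, and hence $\mathcal{R}(I(\mathcal{A}))$ is irreducible.
   Context: $\operatorname{mult}(\mathcal{A})$ is the set of points of $\mathbb{P}^2$ lying on at least three lines of $\mathcal{A}$. An arrangement $\mathcal{A}$ is inductively connected (i.c.) if its lines can be numbered $\mathcal{A}=\{H_1,\dots,H_n\}$ so that, with $\mathcal{A}_t=\{H_1,\dots,H_t\}$, one has $|H_t\cap\operatorname{mult}(\mathcal{A}_t)|\le 2$ for all $t$. Lines are identified with points of $(\mathbb{P}^2)^*$ via their coefficients; the incidence $I(\mathcal{A})$ is the set of triples $\{i,j,k\}$ with $H_i\cap H_j\cap H_k\neq\emptyset$; and $\mathcal{R}(I)=\{(H_1,\dots,H_n)\in((\mathbb{P}^2)^* )^n: H_i\ne H_j\ (i\ne j),\ \det(H_i,H_j,H_k)=0 \text{ iff } \{i,j,k\}\in I\}$ with the Zariski topology. *)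

theory Defs
  imports "HOL-Analysis.Analysis"
begin

text \<open>Points of P^2(C) and lines of P^2(C) (= points of the dual plane) are both
represented by nonzero coefficient vectors in C^3; two vectors represent the same
point/line iff they are proportional.  An arrangement of n lines is a map
H :: nat => complex^3 whose values H 0, ..., H (n-1) are the lines (0-based numbering).\<close>

definition proportional :: "complex^3 \<Rightarrow> complex^3 \<Rightarrow> bool" where
  "proportional u v \<longleftrightarrow> (\<exists>c. c \<noteq> 0 \<and> u = c *s v)"

definition proj_pt :: "complex^3 \<Rightarrow> (complex^3) set" where
  "proj_pt p = {c *s p | c. c \<noteq> 0}"

definition on_line :: "complex^3 \<Rightarrow> complex^3 \<Rightarrow> bool" where
  "on_line p h \<longleftrightarrow> (\<Sum>i\<in>UNIV. h $ i * p $ i) = 0"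

definition line_pts :: "complex^3 \<Rightarrow> (complex^3) set set" where
  "line_pts h = {proj_pt p | p. p \<noteq> 0 \<and> on_line p h}"

definition arrangement :: "nat \<Rightarrow> (nat \<Rightarrow> complex^3) \<Rightarrow> bool" where
  "arrangement n H \<longleftrightarrow> (\<forall>i<n. H i \<noteq> 0) \<and>
     (\<forall>i<n. \<forall>j<n. i \<noteq> j \<longrightarrow> \<not> proportional (H i) (H j))"

definition mult_pts :: "nat set \<Rightarrow> (nat \<Rightarrow> complex^3) \<Rightarrow> (complex^3) set set" where
  "mult_pts S H = {proj_pt p | p. p \<noteq> 0 \<and> card {i \<in> S. on_line p (H i)} \<ge> 3}"

text \<open>"|X| <= 2" for a possibly infinite set.\<close>
definition at_most_two :: "'a set \<Rightarrow> bool" where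
  "at_most_two X \<longleftrightarrow> finite X \<and> card X \<le> 2"

definition inductively_connected :: "nat \<Rightarrow> (nat \<Rightarrow> complex^3) \<Rightarrow> bool" where
  "inductively_connected n H \<longleftrightarrow>
     (\<exists>\<sigma>. bij_betw \<sigma> {..<n} {..<n} \<and>
        (\<forall>t\<in>{1..n}. at_most_two
            (line_pts (H (\<sigma> (t - 1))) \<inter> mult_pts (\<sigma> ` {..<t}) H)))"

definition incidence :: "nat \<Rightarrow> (nat \<Rightarrow> complex^3) \<Rightarrow> nat set set" where
  "incidence n H = {{i, j, k} | i j k. i < n \<and> j < n \<and> k < n \<and> i \<noteq> j \<and> j \<noteq> k \<and> i \<noteq> k \<and>
      (\<exists>p. p \<noteq> 0 \<and> on_line p (H i) \<and> on_line p (H j) \<and> on_line p (H k))}"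

definition det3 :: "complex^3 \<Rightarrow> complex^3 \<Rightarrow> complex^3 \<Rightarrow> complex" where
  "det3 a b c = det (\<chi> r. if r = 1 then a else if r = 2 then b else c :: complex^3^3)"

text \<open>Representatives of points of ((P^2)^*)^n: tuples of nonzero vectors, padded by 0.\<close>
definition proj_tuples :: "nat \<Rightarrow> (nat \<Rightarrow> complex^3) set" where
  "proj_tuples n = {G. (\<forall>i<n. G i \<noteq> 0) \<and> (\<forall>i\<ge>n. G i = 0)}"

text \<open>The realization space R(I) (as the set of representative tuples; it is stable
under rescaling each entry by a nonzero scalar).\<close>
definition realization_space :: "nat \<Rightarrow> nat set set \<Rightarrow> (nat \<Rightarrow> complex^3) set" where
  "realization_space n I = {G \<in> proj_tuples n.
      (\<forall>i<n. \<forall>j<n. i \<noteq> j \<longrightarrow> \<not> proportional (G i) (G j)) \<and>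
      (\<forall>i<n. \<forall>j<n. \<forall>k<n. i \<noteq> j \<and> j \<noteq> k \<and> i \<noteq> k \<longrightarrow>
          (det3 (G i) (G j) (G k) = 0 \<longleftrightarrow> {i, j, k} \<in> I))}"

inductive_set polyfun :: "nat \<Rightarrow> ((nat \<Rightarrow> complex^3) \<Rightarrow> complex) set" for n where
  const: "(\<lambda>G. c) \<in> polyfun n"
| coord: "i < n \<Longrightarrow> (\<lambda>G. G i $ r) \<in> polyfun n"
| add: "f \<in> polyfun n \<Longrightarrow> g \<in> polyfun n \<Longrightarrow> (\<lambda>G. f G + g G) \<in> polyfun n"
| mult: "f \<in> polyfun n \<Longrightarrow> g \<in> polyfun n \<Longrightarrow> (\<lambda>G. f G * g G) \<in> polyfun n"

definition multihom :: "nat \<Rightarrow> ((nat \<Rightarrow> complex^3) \<Rightarrow> complex) \<Rightarrow> bool" where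
  "multihom n f \<longleftrightarrow> f \<in> polyfun n \<and>
     (\<exists>d :: nat \<Rightarrow> nat. \<forall>G (c :: nat \<Rightarrow> complex).
        f (\<lambda>i. c i *s G i) = (\<Prod>i<n. c i ^ d i) * f G)"

definition zariski_closed :: "nat \<Rightarrow> (nat \<Rightarrow> complex^3) set \<Rightarrow> bool" where
  "zariski_closed n Z \<longleftrightarrow> (\<exists>F. (\<forall>f\<in>F. multihom n f) \<and>
      Z = {G \<in> proj_tuples n. \<forall>f\<in>F. f G = 0})"

definition zariski_irreducible :: "nat \<Rightarrow> (nat \<Rightarrow> complex^3) set \<Rightarrow> bool" where
  "zariski_irreducible n X \<longleftrightarrow> X \<noteq> {} \<and>
     (\<forall>Z1 Z2. zariski_closed n Z1 \<and> zariski_closed n Z2 \<and> X \<subseteq> Z1 \<union> Z2 \<longrightarrow>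
        X \<subseteq> Z1 \<or> X \<subseteq> Z2)"

end

theory Submission
  imports Defs "HOL-Computational_Algebra.Polynomial"
begin


definition cr :: "complex^3 \<Rightarrow> complex^3 \<Rightarrow> complex^3" where
  "cr x y = (\<chi> i. if i = 1 then x$2*y$3 - x$3*y$2 else if i = 2 then x$3*y$1 - x$1*y$3
              else x$1*y$2 - x$2*y$1)"

definition dt :: "complex^3 \<Rightarrow> complex^3 \<Rightarrow> complex" where
  "dt x y = x$1*y$1 + x$2*y$2 + x$3*y$3"

lemma cr_comp [simp]:
  "cr x y $ 1 = x$2*y$3 - x$3*y$2" "cr x y $ 2 = x$3*y$1 - x$1*y$3"
  "cr x y $ 3 = x$1*y$2 - x$2*y$1"
  by (simp_all add: cr_def)

lemma vec3_eq: "(x::complex^3) = y \<longleftrightarrow> x$1 = y$1 \<and> x$2 = y$2 \<and> x$3 = y$3"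
  by (simp add: vec_eq_iff forall_3)

lemma on_line_dt: "on_line p h \<longleftrightarrow> dt h p = 0"
  by (simp add: on_line_def dt_def sum_3)

lemma det3_dt: "det3 a b c = dt c (cr a b)"
  by (simp add: det3_def det_3 dt_def) algebra

lemma dt_cr1 [simp]: "dt x (cr x y) = 0" "dt y (cr x y) = 0"
  by (simp_all add: dt_def) algebra+

lemma cr_cr: "cr (cr x y) p = dt x p *s y - dt y p *s x"
  by (simp add: vec3_eq dt_def) algebra

lemma cr_smult: "cr (a *s x) (b *s y) = (a*b) *s cr x y"
  by (simp add: vec3_eq) algebra

lemma dt_smult: "dt (a *s x) (b *s y) = (a*b) * dt x y"
  by (simp add: dt_def) algebra

lemma det3_smult: "det3 (a *s x) (b *s y) (c *s z) = (a*b*c) * det3 x y z"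
  by (simp add: det3_dt cr_smult dt_smult)

lemma det3_perm: "det3 b a c = - det3 a b c" "det3 a c b = - det3 a b c"
  "det3 c b a = - det3 a b c"
  by (simp_all add: det3_dt dt_def) algebra+

lemma cr_zero_prop:
  assumes "p \<noteq> 0" "cr u p = 0" shows "\<exists>m. u = m *s p"
proof -
  have e: "u$2*p$3 = u$3*p$2" "u$3*p$1 = u$1*p$3" "u$1*p$2 = u$2*p$1"
    using assms(2) by (simp_all add: vec3_eq)
  have "p$1 \<noteq> 0 \<or> p$2 \<noteq> 0 \<or> p$3 \<noteq> 0" using assms(1) by (simp add: vec3_eq)
  then show ?thesis
  proof (elim disjE)
    assume h: "p$1 \<noteq> 0"
    show ?thesis by (rule exI[of _ "u$1/p$1"]) (use h e in \<open>simp add: vec3_eq field_simps\<close>)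
  next
    assume h: "p$2 \<noteq> 0"
    show ?thesis by (rule exI[of _ "u$2/p$2"]) (use h e in \<open>simp add: vec3_eq field_simps\<close>)
  next
    assume h: "p$3 \<noteq> 0"
    show ?thesis by (rule exI[of _ "u$3/p$3"]) (use h e in \<open>simp add: vec3_eq field_simps\<close>)
  qed
qed

lemma prop_cr_zero: "proportional x y \<Longrightarrow> cr x y = 0"
  unfolding proportional_def by (auto simp: vec3_eq)

lemma cr_zero_proportional:
  assumes "x \<noteq> 0" "y \<noteq> 0" "cr x y = 0" shows "proportional x y"
proof -
  obtain m where m: "x = m *s y" using cr_zero_prop[OF assms(2,3)] by blast
  have "m \<noteq> 0" using assms(1) m by auto
  thus ?thesis using m by (auto simp: proportional_def)
qed

lemma nprop_cr: "x \<noteq> 0 \<Longrightarrow> y \<noteq> 0 \<Longrightarrow> \<not> proportional x y \<Longrightarrow> cr x y \<noteq> 0"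
  using cr_zero_proportional by blast

lemma perp_two:
  assumes "cr x y \<noteq> 0" "dt x p = 0" "dt y p = 0"
  shows "\<exists>m. p = m *s cr x y"
proof -
  have "cr p (cr x y) = 0"
  proof -
    have "cr (cr x y) p = 0" using cr_cr[of x y p] assms by simp
    thus ?thesis by (simp add: vec3_eq) algebra
  qed
  thus ?thesis using cr_zero_prop[OF assms(1)] by blast
qed

lemma common_det0:
  assumes "p \<noteq> 0" "dt x p = 0" "dt y p = 0" "dt z p = 0"
  shows "det3 x y z = 0"
proof (cases "cr x y = 0")
  case True thus ?thesis by (simp add: det3_dt dt_def)
next
  case False
  have "cr (cr x y) p = 0" using cr_cr[of x y p] assms by simp
  then obtain m where "cr x y = m *s p" using cr_zero_prop[OF assms(1)] by blast
  thus ?thesis using assms(4) by (simp add: det3_dt dt_def) (metis mult.left_commute mult_zero_right distrib_left)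
qed

lemma det0_common:
  assumes "cr x y \<noteq> 0" "det3 x y z = 0"
  shows "dt x (cr x y) = 0 \<and> dt y (cr x y) = 0 \<and> dt z (cr x y) = 0"
  using assms by (simp add: det3_dt)

lemma dt_scale: "dt x (m *s y) = m * dt x y" "dt (m *s x) y = m * dt x y"
  by (simp_all add: dt_def algebra_simps)

lemma cr_scale: "cr (m *s x) y = m *s cr x y" "cr x (m *s y) = m *s cr x y"
  by (simp_all add: vec3_eq algebra_simps)

lemma dt_comm: "dt x y = dt y x" by (simp add: dt_def algebra_simps)

lemma cr_cr2: "cr x (cr y z) = dt x z *s y - dt x y *s z"
  by (simp add: vec3_eq dt_def) algebra

lemma cr_anti: "cr y x = - cr x y" by (simp add: vec3_eq)

lemma ex_dt_nz: "q \<noteq> 0 \<Longrightarrow> \<exists>e. dt q e \<noteq> 0"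
proof -
  assume "q \<noteq> 0"
  hence "q$1 \<noteq> 0 \<or> q$2 \<noteq> 0 \<or> q$3 \<noteq> 0" by (simp add: vec3_eq)
  thus ?thesis
  proof (elim disjE)
    assume "q$1 \<noteq> 0" thus ?thesis
      by (intro exI[of _ "\<chi> i. if i = 1 then 1 else 0"]) (simp add: dt_def)
  next
    assume "q$2 \<noteq> 0" thus ?thesis
      by (intro exI[of _ "\<chi> i. if i = 2 then 1 else 0"]) (simp add: dt_def)
  next
    assume "q$3 \<noteq> 0" thus ?thesis
      by (intro exI[of _ "\<chi> i. if i = 3 then 1 else 0"]) (simp add: dt_def)
  qed
qed

lemma nz_coord: "(q::complex^3) \<noteq> 0 \<Longrightarrow> \<exists>r. q $ r \<noteq> 0"
  by (simp add: vec_eq_iff)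

lemma prop_sym: "proportional x y \<Longrightarrow> proportional y x"
  unfolding proportional_def by (metis field_class.field_inverse vector_smult_assoc vector_smult_lid inverse_nonzero_iff_nonzero)



inductive_set pf :: "((nat \<Rightarrow> complex^3) \<Rightarrow> complex) set" where
  const: "(\<lambda>v. c) \<in> pf"
| coord: "(\<lambda>v. v i $ r) \<in> pf"
| add: "f \<in> pf \<Longrightarrow> g \<in> pf \<Longrightarrow> (\<lambda>v. f v + g v) \<in> pf"
| mult: "f \<in> pf \<Longrightarrow> g \<in> pf \<Longrightarrow> (\<lambda>v. f v * g v) \<in> pf"

lemma pf_diff: "f \<in> pf \<Longrightarrow> g \<in> pf \<Longrightarrow> (\<lambda>v. f v - g v) \<in> pf"
proof -
  assume a: "f \<in> pf" "g \<in> pf"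
  have "(\<lambda>v. (-1) * g v) \<in> pf" by (rule pf.mult[OF pf.const a(2)])
  from pf.add[OF a(1) this] show ?thesis by simp
qed

lemma pf_prod: "finite A \<Longrightarrow> (\<And>a. a \<in> A \<Longrightarrow> F a \<in> pf) \<Longrightarrow> (\<lambda>v. \<Prod>a\<in>A. F a v) \<in> pf"
proof (induction A rule: finite_induct)
  case empty thus ?case by (simp add: pf.const)
next
  case (insert x A)
  have "(\<lambda>v. F x v * (\<Prod>a\<in>A. F a v)) \<in> pf"
    by (rule pf.mult) (use insert in auto)
  thus ?case using insert by simp
qed

lemma pf_line: "f \<in> pf \<Longrightarrow> \<exists>q. \<forall>t. f (\<lambda>i. x i + t *s (y i - x i)) = poly q t"
proof (induction rule: pf.induct)
  case (const c) thus ?case by (intro exI[of _ "[:c:]"]) simp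
next
  case (coord i r) thus ?case
    by (intro exI[of _ "[:x i $ r, y i $ r - x i $ r:]"]) (simp add: algebra_simps)
next
  case (add f g)
  then obtain p q where "\<forall>t. f (\<lambda>i. x i + t *s (y i - x i)) = poly p t"
    "\<forall>t. g (\<lambda>i. x i + t *s (y i - x i)) = poly q t" by blast
  thus ?case by (intro exI[of _ "p + q"]) simp
next
  case (mult f g)
  then obtain p q where "\<forall>t. f (\<lambda>i. x i + t *s (y i - x i)) = poly p t"
    "\<forall>t. g (\<lambda>i. x i + t *s (y i - x i)) = poly q t" by blast
  thus ?case by (intro exI[of _ "p * q"]) simp
qed

lemma pf_domain:
  assumes "f \<in> pf" "g \<in> pf" "f x \<noteq> 0" "g y \<noteq> 0"
  shows "\<exists>z. f z * g z \<noteq> 0"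
proof -
  obtain p where p: "\<forall>t. f (\<lambda>i. x i + t *s (y i - x i)) = poly p t" using pf_line[OF assms(1)] by blast
  obtain q where q: "\<forall>t. g (\<lambda>i. x i + t *s (y i - x i)) = poly q t" using pf_line[OF assms(2)] by blast
  have x0: "(\<lambda>i. x i + (0::complex) *s (y i - x i)) = x" by simp
  have y1: "(\<lambda>i. x i + (1::complex) *s (y i - x i)) = y" by simp
  have "poly p 0 \<noteq> 0" using p[rule_format, of 0] assms(3) x0 by simp
  hence "p \<noteq> 0" by auto
  moreover have "poly q 1 \<noteq> 0" using q[rule_format, of 1] assms(4) y1 by simp
  hence "q \<noteq> 0" by auto
  ultimately have "p * q \<noteq> 0" by simp
  hence "finite {t. poly (p*q) t = 0}" by (rule poly_roots_finite)
  then obtain t where "t \<notin> {t. poly (p*q) t = 0}"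
    using infinite_UNIV_char_0[where 'a=complex] by (metis UNIV_I ex_new_if_finite)
  hence "f (\<lambda>i. x i + t *s (y i - x i)) * g (\<lambda>i. x i + t *s (y i - x i)) \<noteq> 0"
    using p q by simp
  thus ?thesis by blast
qed

lemma pf_cr: assumes "\<And>r. (\<lambda>v. X v $ r) \<in> pf" "\<And>r. (\<lambda>v. Y v $ r) \<in> pf"
  shows "(\<lambda>v. cr (X v) (Y v) $ r) \<in> pf"
proof -
  have "r = 1 \<or> r = 2 \<or> r = 3" by (rule exhaust_3)
  thus ?thesis
    by (elim disjE) (simp_all add: pf_diff pf.mult assms)
qed

lemma pf_dt: assumes "\<And>r. (\<lambda>v. X v $ r) \<in> pf" "\<And>r. (\<lambda>v. Y v $ r) \<in> pf"
  shows "(\<lambda>v. dt (X v) (Y v)) \<in> pf"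
  unfolding dt_def by (intro pf.add pf.mult assms)



locale arr =
  fixes n :: nat and H :: "nat \<Rightarrow> complex^3"
  assumes arr: "arrangement n H"
    and hyp: "\<forall>i<n. at_most_two (mult_pts {..<n} H \<inter> line_pts (H i))"
begin

definition conc :: "nat \<Rightarrow> nat \<Rightarrow> nat \<Rightarrow> bool" where
  "conc i j k \<longleftrightarrow> (\<exists>p. p \<noteq> 0 \<and> on_line p (H i) \<and> on_line p (H j) \<and> on_line p (H k))"

definition S :: "nat \<Rightarrow> (nat \<times> nat) set" where
  "S t = {(a,b). a < b \<and> b < t \<and> conc a b t}"

definition pt :: "nat \<Rightarrow> nat \<Rightarrow> complex^3" where
  "pt a b = cr (H a) (H b)"

lemma H_nz: "i < n \<Longrightarrow> H i \<noteq> 0" using arr by (simp add: arrangement_def)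

lemma H_np: "i < n \<Longrightarrow> j < n \<Longrightarrow> i \<noteq> j \<Longrightarrow> \<not> proportional (H i) (H j)"
  using arr by (simp add: arrangement_def)

lemma pt_nz: "a < n \<Longrightarrow> b < n \<Longrightarrow> a \<noteq> b \<Longrightarrow> pt a b \<noteq> 0"
  unfolding pt_def by (intro nprop_cr H_nz H_np)

lemma conc_pt:
  assumes "a < n" "b < n" "a \<noteq> b" "conc a b k"
  shows "dt (H k) (pt a b) = 0"
proof -
  obtain p where p: "p \<noteq> 0" "dt (H a) p = 0" "dt (H b) p = 0" "dt (H k) p = 0"
    using assms(4) by (auto simp: conc_def on_line_dt)
  obtain m where m: "p = m *s pt a b"
    using perp_two[OF pt_nz[OF assms(1-3), unfolded pt_def] p(2,3)] by (auto simp: pt_def)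
  have "m \<noteq> 0" using m p(1) by auto
  thus ?thesis using p(4) m by (simp add: dt_scale)
qed

lemma pt_conc:
  assumes "a < n" "b < n" "a \<noteq> b" "dt (H k) (pt a b) = 0"
  shows "conc a b k"
  unfolding conc_def on_line_dt
  using pt_nz[OF assms(1-3)] assms(4) by (intro exI[of _ "pt a b"]) (simp add: pt_def)

lemma conc_sym: "conc i j k \<Longrightarrow> conc j i k" "conc i j k \<Longrightarrow> conc i k j" "conc i j k \<Longrightarrow> conc k j i"
  unfolding conc_def by blast+

lemma inc_conc: assumes "{i,j,k} \<in> incidence n H" shows "conc i j k"
proof -
  obtain i' j' k' p where e: "{i,j,k} = {i',j',k'}" "p \<noteq> 0" "on_line p (H i')" "on_line p (H j')"
     "on_line p (H k')" using assms unfolding incidence_def by blast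
  have "\<forall>x\<in>{i',j',k'}. on_line p (H x)" using e by blast
  hence "\<forall>x\<in>{i,j,k}. on_line p (H x)" using e(1) by simp
  thus ?thesis using e(2) unfolding conc_def by blast
qed

lemma conc_inc: "i < n \<Longrightarrow> j < n \<Longrightarrow> k < n \<Longrightarrow> i \<noteq> j \<Longrightarrow> j \<noteq> k \<Longrightarrow> i \<noteq> k \<Longrightarrow> conc i j k
   \<Longrightarrow> {i,j,k} \<in> incidence n H"
  unfolding incidence_def mem_Collect_eq
  apply (rule exI[of _ i], rule exI[of _ j], rule exI[of _ k])
  by (simp add: conc_def)

lemma pp_eq: "proj_pt u = proj_pt v \<Longrightarrow> proportional u v"
proof -
  assume "proj_pt u = proj_pt v"
  have "u \<in> proj_pt u" unfolding proj_pt_def by (rule CollectI, rule exI[of _ 1]) simp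
  hence "u \<in> proj_pt v" using \<open>proj_pt u = proj_pt v\<close> by simp
  then obtain c where "u = c *s v" "c \<noteq> 0" unfolding proj_pt_def by blast
  thus ?thesis unfolding proportional_def by blast
qed

lemma S_mem: assumes "(x,y) \<in> S t" "t < n"
  shows "proj_pt (pt x y) \<in> mult_pts {..<n} H \<inter> line_pts (H t)"
proof -
  have xy: "x < y" "y < t" "conc x y t" using assms(1) by (auto simp: S_def)
  have nz: "pt x y \<noteq> 0" using xy assms(2) by (intro pt_nz) auto
  have ht: "on_line (pt x y) (H t)" using conc_pt[OF _ _ _ xy(3)] xy assms(2)
    by (simp add: on_line_dt)
  have "{x,y,t} \<subseteq> {i \<in> {..<n}. on_line (pt x y) (H i)}"
    using xy assms(2) ht by (auto simp: on_line_dt pt_def)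
  hence "card {x,y,t} \<le> card {i \<in> {..<n}. on_line (pt x y) (H i)}"
    by (intro card_mono) auto
  moreover have "card {x,y,t} = 3" using xy by auto
  ultimately have "card {i \<in> {..<n}. on_line (pt x y) (H i)} \<ge> 3" by simp
  hence "proj_pt (pt x y) \<in> mult_pts {..<n} H" unfolding mult_pts_def using nz by blast
  moreover have "proj_pt (pt x y) \<in> line_pts (H t)" unfolding line_pts_def using nz ht by blast
  ultimately show ?thesis by blast
qed

definition good :: "nat \<Rightarrow> nat \<times> (nat \<times> nat) \<times> (nat \<times> nat) \<Rightarrow> bool" where
  "good t ch = (case ch of (k,(a,b),(c,d)) \<Rightarrow>
     (k = 0 \<and> S t = {}) \<or>
     (k = 1 \<and> (a,b) \<in> S t \<and> (\<forall>(x,y)\<in>S t. proportional (pt x y) (pt a b))) \<or>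
     (k = 2 \<and> (a,b) \<in> S t \<and> (c,d) \<in> S t \<and> \<not> proportional (pt a b) (pt c d) \<and>
        (\<forall>(x,y)\<in>S t. proportional (pt x y) (pt a b) \<or> proportional (pt x y) (pt c d))))"

lemma ex_good: assumes "t < n" shows "\<exists>ch. good t ch"
proof (cases "S t = {}")
  case True thus ?thesis by (intro exI[of _ "(0,(0,0),(0,0))"]) (simp add: good_def)
next
  case False
  then obtain a b where ab: "(a,b) \<in> S t" by auto
  show ?thesis
  proof (cases "\<forall>(x,y)\<in>S t. proportional (pt x y) (pt a b)")
    case True thus ?thesis using ab by (intro exI[of _ "(1,(a,b),(0,0))"]) (simp add: good_def)
  next
    case False
    then obtain c d where cd: "(c,d) \<in> S t" "\<not> proportional (pt c d) (pt a b)" by auto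
    show ?thesis
    proof (cases "\<forall>(x,y)\<in>S t. proportional (pt x y) (pt a b) \<or> proportional (pt x y) (pt c d)")
      case True thus ?thesis using ab cd prop_sym
        by (intro exI[of _ "(2,(a,b),(c,d))"]) (auto simp: good_def)
    next
      case False
      then obtain e f where ef: "(e,f) \<in> S t" "\<not> proportional (pt e f) (pt a b)"
        "\<not> proportional (pt e f) (pt c d)" by auto
      let ?M = "mult_pts {..<n} H \<inter> line_pts (H t)"
      have fin: "finite ?M" "card ?M \<le> 2" using hyp assms by (auto simp: at_most_two_def)
      have sub: "{proj_pt (pt a b), proj_pt (pt c d), proj_pt (pt e f)} \<subseteq> ?M"
        using S_mem[OF ab assms] S_mem[OF cd(1) assms] S_mem[OF ef(1) assms] by auto
      have d1: "proj_pt (pt a b) \<noteq> proj_pt (pt c d)" using cd(2) pp_eq by metis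
      have d2: "proj_pt (pt e f) \<noteq> proj_pt (pt a b)" using ef(2) pp_eq by metis
      have d3: "proj_pt (pt e f) \<noteq> proj_pt (pt c d)" using ef(3) pp_eq by metis
      have "card {proj_pt (pt a b), proj_pt (pt c d), proj_pt (pt e f)} = 3"
        using d1 d2 d3 by auto
      moreover have "card {proj_pt (pt a b), proj_pt (pt c d), proj_pt (pt e f)} \<le> card ?M"
        by (rule card_mono[OF fin(1) sub])
      ultimately show ?thesis using fin(2) by simp
    qed
  qed
qed

definition choice :: "nat \<Rightarrow> nat \<times> (nat \<times> nat) \<times> (nat \<times> nat)" where
  "choice t = (SOME ch. good t ch)"

lemma choice_good: "t < n \<Longrightarrow> good t (choice t)"
  unfolding choice_def using ex_good by (rule someI_ex)


lemma choice_cases: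
  assumes "t < n"
  obtains (k0) a b c d where "choice t = (0,(a,b),(c,d))" "S t = {}"
  | (k1) a b c d where "choice t = (1,(a,b),(c,d))" "(a,b) \<in> S t"
      "\<forall>(x,y)\<in>S t. proportional (pt x y) (pt a b)"
  | (k2) a b c d where "choice t = (2,(a,b),(c,d))" "(a,b) \<in> S t" "(c,d) \<in> S t"
      "\<not> proportional (pt a b) (pt c d)"
      "\<forall>(x,y)\<in>S t. proportional (pt x y) (pt a b) \<or> proportional (pt x y) (pt c d)"
proof -
  obtain k a b c d where ch: "choice t = (k,(a,b),(c,d))" by (metis prod.collapse)
  have "good t (k,(a,b),(c,d))" using choice_good[OF assms] ch by simp
  thus ?thesis using that ch unfolding good_def by auto
qed

definition stp :: "(nat \<Rightarrow> complex^3) \<Rightarrow> (nat \<Rightarrow> complex^3) \<Rightarrow> nat \<Rightarrow> complex^3" where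
  "stp X w t = (case choice t of (k,(a,b),(c,d)) \<Rightarrow>
     if k = 0 then w t else if k = 1 then cr (cr (X a) (X b)) (w t)
     else cr (cr (X a) (X b)) (cr (X c) (X d)))"

primrec psi :: "nat \<Rightarrow> (nat \<Rightarrow> complex^3) \<Rightarrow> nat \<Rightarrow> complex^3" where
  "psi 0 w = (\<lambda>_. 0)"
| "psi (Suc t) w = (psi t w)(t := stp (psi t w) w t)"

lemma psi_ge: "t \<le> s \<Longrightarrow> psi t w s = 0"
  by (induction t) auto

lemma psi_lt: "s < t \<Longrightarrow> psi t w s = psi (Suc s) w s"
proof (induction t)
  case 0 thus ?case by simp
next
  case (Suc t) thus ?case by (cases "s = t") (auto simp del: psi.simps(2), simp)
qed

lemma psi_dep: "(\<forall>s<t. w s = w' s) \<Longrightarrow> psi t w = psi t w'"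
proof (induction t)
  case 0 thus ?case by simp
next
  case (Suc t)
  hence "psi t w = psi t w'" by simp
  moreover have "w t = w' t" using Suc.prems by simp
  moreover have "stp X w t = stp X w' t" for X
    unfolding stp_def using \<open>w t = w' t\<close> by (cases "choice t") auto
  ultimately show ?case by simp
qed

lemma S_idx: "(a,b) \<in> S t \<Longrightarrow> a < b \<and> b < t \<and> conc a b t"
  by (simp add: S_def)

lemma stp_local:
  assumes "t < n" "\<forall>s<t. X s = Y s" shows "stp X w t = stp Y w t"
  using assms(1)
proof (cases rule: choice_cases)
  case (k0 a b c d) thus ?thesis by (simp add: stp_def)
next
  case (k1 a b c d) thus ?thesis using S_idx[OF k1(2)] assms(2) by (simp add: stp_def)
next
  case (k2 a b c d) thus ?thesis using S_idx[OF k2(2)] S_idx[OF k2(3)] assms(2) by (simp add: stp_def)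
qed

lemma psi_stp: assumes "t < n" shows "psi n w t = stp (psi n w) w t"
proof -
  have "psi n w t = stp (psi t w) w t" using psi_lt[OF assms] by simp
  also have "\<dots> = stp (psi n w) w t"
  proof (rule stp_local[OF assms])
    show "\<forall>s<t. psi t w s = psi n w s" using psi_lt assms by (metis order.strict_trans)
  qed
  finally show ?thesis .
qed

lemma pf_psi: "(\<lambda>v. psi t v i $ r) \<in> pf"
proof (induction t arbitrary: i r)
  case 0 thus ?case by (simp add: pf.const)
next
  case (Suc t)
  show ?case
  proof (cases "i = t")
    case False thus ?thesis using Suc by simp
  next
    case True
    obtain k a b c d where ch: "choice t = (k,(a,b),(c,d))" by (metis prod.collapse)
    have "(\<lambda>v. stp (psi t v) v t $ r) \<in> pf"
    proof (cases "k = 0")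
      case True thus ?thesis unfolding stp_def ch by (simp add: pf.coord)
    next
      case k: False
      show ?thesis
      proof (cases "k = 1")
        case True thus ?thesis unfolding stp_def ch using Suc by (simp add: pf_cr pf.coord)
      next
        case False thus ?thesis unfolding stp_def ch using Suc k by (simp add: pf_cr pf.coord)
      qed
    qed
    thus ?thesis using True by simp
  qed
qed

lemma pf_polyfun: "f \<in> polyfun n \<Longrightarrow> (\<lambda>v. f (psi n v)) \<in> pf"
proof (induction rule: polyfun.induct)
  case (const c) thus ?case by (rule pf.const)
next
  case (coord i r) show ?case by (rule pf_psi)
next
  case (add f g) thus ?case using pf.add by blast
next
  case (mult f g) thus ?case using pf.mult by blast
qed


lemma prop_perp: "proportional u w \<Longrightarrow> dt h u = 0 \<Longrightarrow> dt h w = 0"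
  unfolding proportional_def by (auto simp: dt_scale)

lemma dt_cr_r: "dt (cr p w) p = 0" "dt (cr w p) p = 0"
  using dt_cr1[of p w] dt_cr1[of w p] by (simp_all add: dt_comm)

lemma CH:
  assumes "k < n" "x < k" "y < k" "x \<noteq> y" "conc x y k"
  shows "\<exists>a b. (a,b) \<in> S k \<and> dt (H x) (pt a b) = 0 \<and> dt (H y) (pt a b) = 0 \<and>
     dt (psi n v k) (cr (psi n v a) (psi n v b)) = 0"
proof -
  define a0 where "a0 = min x y"
  define b0 where "b0 = max x y"
  have c0: "conc a0 b0 k" using assms(5) conc_sym(1) unfolding a0_def b0_def
    by (cases "x \<le> y") (auto simp: min_def max_def)
  have S0: "(a0,b0) \<in> S k" using assms c0 unfolding S_def a0_def b0_def by auto
  have hx: "dt (H x) (pt a0 b0) = 0" "dt (H y) (pt a0 b0) = 0"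
    unfolding a0_def b0_def pt_def by (cases "x \<le> y"; simp add: min_def max_def)+
  show ?thesis using assms(1)
  proof (cases rule: choice_cases)
    case (k0 a b c d) thus ?thesis using S0 by auto
  next
    case (k1 a b c d)
    have pr: "proportional (pt a0 b0) (pt a b)" using k1(3) S0 by auto
    have "psi n v k = cr (cr (psi n v a) (psi n v b)) (v k)"
      using psi_stp[OF assms(1)] k1(1) by (simp add: stp_def)
    thus ?thesis using k1(2) prop_perp[OF pr hx(1)] prop_perp[OF pr hx(2)]
      by (intro exI[of _ a] exI[of _ b]) (simp add: dt_cr_r)
  next
    case (k2 a b c d)
    have ps: "psi n v k = cr (cr (psi n v a) (psi n v b)) (cr (psi n v c) (psi n v d))"
      using psi_stp[OF assms(1)] k2(1) by (simp add: stp_def)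
    have "proportional (pt a0 b0) (pt a b) \<or> proportional (pt a0 b0) (pt c d)"
      using k2(5) S0 by auto
    thus ?thesis
    proof
      assume pr: "proportional (pt a0 b0) (pt a b)"
      thus ?thesis using k2(2) prop_perp[OF pr hx(1)] prop_perp[OF pr hx(2)] ps
        by (intro exI[of _ a] exI[of _ b]) (simp add: dt_cr_r)
    next
      assume pr: "proportional (pt a0 b0) (pt c d)"
      thus ?thesis using k2(3) prop_perp[OF pr hx(1)] prop_perp[OF pr hx(2)] ps
        by (intro exI[of _ c] exI[of _ d]) (simp add: dt_cr_r)
    qed
  qed
qed

definition OC :: "(nat \<Rightarrow> complex^3) \<Rightarrow> bool" where
  "OC X \<longleftrightarrow> (\<forall>i<n. X i \<noteq> 0) \<and> (\<forall>i<n. \<forall>j<n. i \<noteq> j \<longrightarrow> cr (X i) (X j) \<noteq> 0)"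

lemma key:
  assumes oc: "OC (psi n v)" and "k < n" "x < k" "y < k" "x \<noteq> y" "conc x y k"
    and IH: "\<forall>x y z. x<k \<and> y<k \<and> z<k \<and> x\<noteq>y \<and> y\<noteq>z \<and> x\<noteq>z \<and> conc x y z \<longrightarrow>
       det3 (psi n v x) (psi n v y) (psi n v z) = 0"
  shows "det3 (psi n v x) (psi n v y) (psi n v k) = 0"
proof -
  let ?X = "psi n v"
  obtain a b where ab: "(a,b) \<in> S k" "dt (H x) (pt a b) = 0" "dt (H y) (pt a b) = 0"
     "dt (?X k) (cr (?X a) (?X b)) = 0" using CH[OF assms(2-6)] by blast
  have abi: "a < b" "b < k" using S_idx[OF ab(1)] by auto
  have pnz: "cr (?X a) (?X b) \<noteq> 0" using oc abi assms(2) unfolding OC_def by auto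
  have gen: "dt (?X z) (cr (?X a) (?X b)) = 0" if "z < k" "dt (H z) (pt a b) = 0" for z
  proof (cases "z = a \<or> z = b")
    case True thus ?thesis by auto
  next
    case False
    have "conc a b z" using pt_conc[of a b z] abi assms(2) that by auto
    hence "det3 (?X a) (?X b) (?X z) = 0" using IH abi that False by auto
    thus ?thesis by (simp add: det3_dt)
  qed
  show ?thesis
    by (rule common_det0[OF pnz gen[OF assms(3) ab(2)] gen[OF assms(4) ab(3)] ab(4)])
qed

lemma triples:
  assumes oc: "OC (psi n v)"
  shows "k \<le> n \<Longrightarrow> \<forall>x y z. x<k \<and> y<k \<and> z<k \<and> x\<noteq>y \<and> y\<noteq>z \<and> x\<noteq>z \<and> conc x y z \<longrightarrow>
       det3 (psi n v x) (psi n v y) (psi n v z) = 0"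
proof (induction k)
  case 0 thus ?case by simp
next
  case (Suc k)
  hence IH: "\<forall>x y z. x<k \<and> y<k \<and> z<k \<and> x\<noteq>y \<and> y\<noteq>z \<and> x\<noteq>z \<and> conc x y z \<longrightarrow>
       det3 (psi n v x) (psi n v y) (psi n v z) = 0" and kn: "k < n" by auto
  show ?case
  proof (intro allI impI, elim conjE)
    fix x y z assume h: "x < Suc k" "y < Suc k" "z < Suc k" "x \<noteq> y" "y \<noteq> z" "x \<noteq> z" "conc x y z"
    show "det3 (psi n v x) (psi n v y) (psi n v z) = 0"
    proof (cases "z = k")
      case True thus ?thesis using key[OF oc kn, of x y] h IH by auto
    next
      case zk: False
      show ?thesis
      proof (cases "y = k")
        case True
        have "det3 (psi n v x) (psi n v z) (psi n v k) = 0"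
          using key[OF oc kn, of x z] h IH zk True conc_sym(2)[OF h(7)] by auto
        thus ?thesis using True det3_perm(2)[of "psi n v x" "psi n v z" "psi n v k"] by simp
      next
        case yk: False
        show ?thesis
        proof (cases "x = k")
          case True
          have "det3 (psi n v z) (psi n v y) (psi n v k) = 0"
            using key[OF oc kn, of z y] h IH zk yk True conc_sym(3)[OF h(7)] by auto
          thus ?thesis using True det3_perm(3)[of "psi n v z" "psi n v y" "psi n v k"] by simp
        next
          case False thus ?thesis using IH h zk yk by auto
        qed
      qed
    qed
  qed
qed


abbreviation "RS \<equiv> realization_space n (incidence n H)"

lemma R_nz: "G \<in> RS \<Longrightarrow> i < n \<Longrightarrow> G i \<noteq> 0"
  by (simp add: realization_space_def proj_tuples_def)
lemma R_z: "G \<in> RS \<Longrightarrow> n \<le> i \<Longrightarrow> G i = 0"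
  by (simp add: realization_space_def proj_tuples_def)
lemma R_cr: "G \<in> RS \<Longrightarrow> i < n \<Longrightarrow> j < n \<Longrightarrow> i \<noteq> j \<Longrightarrow> cr (G i) (G j) \<noteq> 0"
  by (intro nprop_cr R_nz) (auto simp: realization_space_def)
lemma R_det: "G \<in> RS \<Longrightarrow> i < n \<Longrightarrow> j < n \<Longrightarrow> k < n \<Longrightarrow> i \<noteq> j \<Longrightarrow> j \<noteq> k \<Longrightarrow> i \<noteq> k \<Longrightarrow>
   det3 (G i) (G j) (G k) = 0 \<longleftrightarrow> {i,j,k} \<in> incidence n H"
  by (simp add: realization_space_def)

lemma R_perp: assumes "G \<in> RS" "(a,b) \<in> S t" "t < n"
  shows "dt (G t) (cr (G a) (G b)) = 0"
proof -
  have i: "a < b" "b < t" "conc a b t" using S_idx[OF assms(2)] by auto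
  have "{a,b,t} \<in> incidence n H" using conc_inc[OF _ _ _ _ _ _ i(3)] i assms(3) by auto
  hence "det3 (G a) (G b) (G t) = 0" using R_det[OF assms(1), of a b t] i assms(3) by auto
  thus ?thesis by (simp add: det3_dt)
qed

lemma R_q_np:
  assumes G: "G \<in> RS" and ab: "(a,b) \<in> S t" and cd: "(c,d) \<in> S t" and t: "t < n"
    and np: "\<not> proportional (pt a b) (pt c d)"
  shows "cr (cr (G a) (G b)) (cr (G c) (G d)) \<noteq> 0"
proof
  assume z: "cr (cr (G a) (G b)) (cr (G c) (G d)) = 0"
  have i1: "a < b" "b < t" using S_idx[OF ab] by auto
  have i2: "c < d" "d < t" using S_idx[OF cd] by auto
  let ?q1 = "cr (G a) (G b)" and ?q2 = "cr (G c) (G d)"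
  have q1: "?q1 \<noteq> 0" using R_cr[OF G] i1 t by auto
  have q2: "?q2 \<noteq> 0" using R_cr[OF G] i2 t by auto
  obtain \<mu> where mu: "?q1 = \<mu> *s ?q2" using cr_zero_prop[OF q2 z] by blast
  have hz: "dt (H z) (pt a b) = 0" if zz: "z = c \<or> z = d" for z
  proof (cases "z = a \<or> z = b")
    case True thus ?thesis by (auto simp: pt_def)
  next
    case False
    have "dt (G z) ?q2 = 0" using zz by auto
    hence "dt (G z) ?q1 = 0" using mu by (simp add: dt_scale)
    hence "det3 (G a) (G b) (G z) = 0" by (intro common_det0[OF q1]) auto
    hence "{a,b,z} \<in> incidence n H" using R_det[OF G, of a b z] i1 i2 t False zz by auto
    hence "conc a b z" by (rule inc_conc)
    thus ?thesis using conc_pt i1 t by auto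
  qed
  have pcd: "pt c d \<noteq> 0" using pt_nz i2 t by auto
  have pab: "pt a b \<noteq> 0" using pt_nz i1 t by auto
  obtain m where m: "pt a b = m *s cr (H c) (H d)"
    using perp_two[OF pcd[unfolded pt_def] hz[of c] hz[of d]] by auto
  have "m \<noteq> 0" using m pab by auto
  hence "proportional (pt a b) (pt c d)" using m unfolding proportional_def pt_def by blast
  thus False using np by simp
qed

lemma lemA_step:
  assumes G: "G \<in> RS" and t: "t < n" and old: "\<forall>s<t. \<exists>c. c \<noteq> 0 \<and> psi n w s = c *s G s"
  shows "\<exists>w'. \<forall>s<Suc t. \<exists>c. c \<noteq> 0 \<and> psi n w' s = c *s G s"
proof -
  have keep: "\<forall>s<t. psi n (w(t := e)) s = psi n w s" for e
  proof (intro allI impI)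
    fix s assume s: "s < t"
    have "psi n (w(t := e)) s = psi (Suc s) (w(t := e)) s" using psi_lt s t by simp
    also have "\<dots> = psi (Suc s) w s" using psi_dep[of "Suc s" "w(t := e)" w] s by simp
    also have "\<dots> = psi n w s" using psi_lt s t by simp
    finally show "psi n (w(t := e)) s = psi n w s" .
  qed
  have newt: "\<exists>e. \<exists>c. c \<noteq> 0 \<and> psi n (w(t := e)) t = c *s G t"
    using t
  proof (cases rule: choice_cases)
    case (k0 a b c d)
    have "psi n (w(t := G t)) t = G t" using psi_stp[OF t] k0(1) by (simp add: stp_def)
    thus ?thesis by (intro exI[of _ "G t"] exI[of _ 1]) simp
  next
    case (k1 a b c d)
    have i: "a < b" "b < t" using S_idx[OF k1(2)] by auto
    obtain ca where ca: "ca \<noteq> 0" "psi n w a = ca *s G a" using old i less_trans by metis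
    obtain cb where cb: "cb \<noteq> 0" "psi n w b = cb *s G b" using old i less_trans by metis
    let ?q = "cr (G a) (G b)"
    have q: "?q \<noteq> 0" using R_cr[OF G] i t by auto
    obtain e0 where e0: "dt ?q e0 \<noteq> 0" using ex_dt_nz[OF q] by blast
    have perp: "dt ?q (G t) = 0" using R_perp[OF G k1(2) t] by (simp add: dt_comm)
    let ?e = "cr (G t) e0"
    have "psi n (w(t := ?e)) t = cr (cr (psi n (w(t := ?e)) a) (psi n (w(t := ?e)) b)) ?e"
      using psi_stp[OF t] k1(1) by (simp add: stp_def)
    also have "\<dots> = cr (cr (ca *s G a) (cb *s G b)) ?e" using keep ca cb i by simp
    also have "\<dots> = (ca * cb * dt ?q e0) *s G t"
      by (simp add: cr_scale cr_cr2 perp dt_scale mult.commute)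
    finally show ?thesis using ca cb e0 by (intro exI[of _ ?e] exI[of _ "ca * cb * dt ?q e0"]) simp
  next
    case (k2 a b c d)
    have i: "a < b" "b < t" using S_idx[OF k2(2)] by auto
    have j: "c < d" "d < t" using S_idx[OF k2(3)] by auto
    obtain ca where ca: "ca \<noteq> 0" "psi n w a = ca *s G a" using old i less_trans by metis
    obtain cb where cb: "cb \<noteq> 0" "psi n w b = cb *s G b" using old i less_trans by metis
    obtain cc where cc: "cc \<noteq> 0" "psi n w c = cc *s G c" using old j less_trans by metis
    obtain cd where cd: "cd \<noteq> 0" "psi n w d = cd *s G d" using old j less_trans by metis
    let ?q1 = "cr (G a) (G b)" and ?q2 = "cr (G c) (G d)"
    have nz: "cr ?q1 ?q2 \<noteq> 0" by (rule R_q_np[OF G k2(2) k2(3) t k2(4)])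
    obtain m where m: "G t = m *s cr ?q1 ?q2"
      using perp_two[OF nz R_perp[OF G k2(2) t, unfolded dt_comm[of "G t"]]
            R_perp[OF G k2(3) t, unfolded dt_comm[of "G t"]]] by (auto simp: dt_comm)
    have m0: "m \<noteq> 0" using m R_nz[OF G t] by auto
    have "psi n (w(t := 0)) t = cr (cr (psi n (w(t := 0)) a) (psi n (w(t := 0)) b))
        (cr (psi n (w(t := 0)) c) (psi n (w(t := 0)) d))"
      using psi_stp[OF t] k2(1) by (simp add: stp_def)
    also have "\<dots> = cr (cr (ca *s G a) (cb *s G b)) (cr (cc *s G c) (cd *s G d))"
      using keep ca cb cc cd i j by simp
    also have "\<dots> = (ca * cb * (cc * cd)) *s cr ?q1 ?q2" by (simp add: cr_scale)
    also have "\<dots> = (ca * cb * (cc * cd) / m) *s G t" using m m0 by simp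
    finally show ?thesis using ca cb cc cd m0
      by (intro exI[of _ "0::complex^3"] exI[of _ "ca * cb * (cc * cd) / m"]) simp
  qed
  then obtain e c where ec: "c \<noteq> 0" "psi n (w(t := e)) t = c *s G t" by blast
  show ?thesis
  proof (intro exI[of _ "w(t := e)"] allI impI)
    fix s assume "s < Suc t"
    thus "\<exists>c. c \<noteq> 0 \<and> psi n (w(t := e)) s = c *s G s"
      using ec keep old by (cases "s = t") auto
  qed
qed

lemma lemA: assumes G: "G \<in> RS"
  shows "\<exists>w. \<forall>s<n. \<exists>c. c \<noteq> 0 \<and> psi n w s = c *s G s"
proof -
  have "t \<le> n \<Longrightarrow> \<exists>w. \<forall>s<t. \<exists>c. c \<noteq> 0 \<and> psi n w s = c *s G s" for t
  proof (induction t)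
    case 0 thus ?case by simp
  next
    case (Suc t) thus ?case using lemA_step[OF G] by auto
  qed
  thus ?thesis by simp
qed


definition H0 :: "nat \<Rightarrow> complex^3" where "H0 i = (if i < n then H i else 0)"

lemma H_det: assumes "i < n" "j < n" "k < n" "i \<noteq> j" "j \<noteq> k" "i \<noteq> k"
  shows "det3 (H i) (H j) (H k) = 0 \<longleftrightarrow> {i,j,k} \<in> incidence n H"
proof
  assume d: "det3 (H i) (H j) (H k) = 0"
  have "dt (H k) (pt i j) = 0" using d by (simp add: det3_dt pt_def)
  hence "conc i j k" using pt_conc assms by auto
  thus "{i,j,k} \<in> incidence n H" using conc_inc assms by auto
next
  assume "{i,j,k} \<in> incidence n H"
  hence "conc i j k" by (rule inc_conc)
  then obtain p where "p \<noteq> 0" "dt (H i) p = 0" "dt (H j) p = 0" "dt (H k) p = 0"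
    by (auto simp: conc_def on_line_dt)
  thus "det3 (H i) (H j) (H k) = 0" by (rule common_det0)
qed

lemma H0_R: "H0 \<in> RS"
  unfolding realization_space_def proj_tuples_def H0_def
  using H_nz H_np H_det by auto

definition r1 :: "nat \<Rightarrow> 3" where "r1 i = (SOME r. H i $ r \<noteq> 0)"
definition r2 :: "nat \<Rightarrow> nat \<Rightarrow> 3" where "r2 i j = (SOME r. pt i j $ r \<noteq> 0)"

lemma r1: "i < n \<Longrightarrow> H i $ r1 i \<noteq> 0"
  unfolding r1_def using nz_coord[OF H_nz] by (rule someI_ex)
lemma r2: "i < n \<Longrightarrow> j < n \<Longrightarrow> i \<noteq> j \<Longrightarrow> pt i j $ r2 i j \<noteq> 0"
  unfolding r2_def using nz_coord[OF pt_nz] by (rule someI_ex)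

definition F1 where "F1 v i = psi n v i $ r1 i"
definition F2 where "F2 v i j = (if i = j then 1 else cr (psi n v i) (psi n v j) $ r2 i j)"
definition F3 where "F3 v i j k = (if i \<noteq> j \<and> j \<noteq> k \<and> i \<noteq> k \<and> {i,j,k} \<notin> incidence n H
    then det3 (psi n v i) (psi n v j) (psi n v k) else 1)"

definition P :: "(nat \<Rightarrow> complex^3) \<Rightarrow> complex" where
  "P v = (\<Prod>i<n. F1 v i) * (\<Prod>i<n. \<Prod>j<n. F2 v i j) * (\<Prod>i<n. \<Prod>j<n. \<Prod>k<n. F3 v i j k)"

lemma pf_P: "P \<in> pf"
proof -
  have c: "\<And>r i. (\<lambda>v. psi n v i $ r) \<in> pf" by (rule pf_psi)
  have a1: "(\<lambda>v. F1 v i) \<in> pf" for i unfolding F1_def by (rule pf_psi)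
  have a2: "(\<lambda>v. F2 v i j) \<in> pf" for i j
    unfolding F2_def by (cases "i = j") (simp_all add: pf.const pf_cr c)
  have a3: "(\<lambda>v. F3 v i j k) \<in> pf" for i j k
  proof (cases "i \<noteq> j \<and> j \<noteq> k \<and> i \<noteq> k \<and> {i,j,k} \<notin> incidence n H")
    case True
    hence e: "(\<lambda>v. F3 v i j k) = (\<lambda>v. dt (psi n v k) (cr (psi n v i) (psi n v j)))"
      unfolding F3_def det3_dt by simp
    show ?thesis unfolding e by (intro pf_dt c pf_cr)
  next
    case False
    hence e: "(\<lambda>v. F3 v i j k) = (\<lambda>v. 1)" unfolding F3_def by (intro ext) (simp only: if_False)
    show ?thesis unfolding e by (rule pf.const)
  qed
  show ?thesis unfolding P_def
    by (intro pf.mult pf_prod a1 a2 a3 finite_lessThan)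
qed

lemma P_ok: assumes "P v \<noteq> 0" shows "psi n v \<in> RS"
proof -
  let ?X = "psi n v"
  have f1: "\<And>i. i < n \<Longrightarrow> F1 v i \<noteq> 0" and f2: "\<And>i j. i < n \<Longrightarrow> j < n \<Longrightarrow> F2 v i j \<noteq> 0"
    and f3: "\<And>i j k. i < n \<Longrightarrow> j < n \<Longrightarrow> k < n \<Longrightarrow> F3 v i j k \<noteq> 0"
    using assms unfolding P_def by auto
  have nz: "\<And>i. i < n \<Longrightarrow> ?X i \<noteq> 0" using f1 unfolding F1_def by force
  have crn: "\<And>i j. i < n \<Longrightarrow> j < n \<Longrightarrow> i \<noteq> j \<Longrightarrow> cr (?X i) (?X j) \<noteq> 0"
    using f2 unfolding F2_def by force
  have oc: "OC ?X" unfolding OC_def using nz crn by blast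
  have np: "\<And>i j. i < n \<Longrightarrow> j < n \<Longrightarrow> i \<noteq> j \<Longrightarrow> \<not> proportional (?X i) (?X j)"
    using crn prop_cr_zero by blast
  have det: "det3 (?X i) (?X j) (?X k) = 0 \<longleftrightarrow> {i,j,k} \<in> incidence n H"
    if h: "i < n" "j < n" "k < n" "i \<noteq> j" "j \<noteq> k" "i \<noteq> k" for i j k
  proof
    assume "det3 (?X i) (?X j) (?X k) = 0"
    thus "{i,j,k} \<in> incidence n H" using f3[OF h(1-3)] h unfolding F3_def
      by (cases "{i,j,k} \<in> incidence n H") auto
  next
    assume "{i,j,k} \<in> incidence n H"
    hence "conc i j k" by (rule inc_conc)
    thus "det3 (?X i) (?X j) (?X k) = 0" using triples[OF oc order_refl] h by blast
  qed
  show ?thesis unfolding realization_space_def proj_tuples_def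
    using nz np det psi_ge[of n _ v] by auto
qed

lemma P_u0: "\<exists>u. P u \<noteq> 0"
proof -
  obtain u where u: "\<forall>s<n. \<exists>c. c \<noteq> 0 \<and> psi n u s = c *s H0 s" using lemA[OF H0_R] by blast
  then obtain cf where cf: "\<forall>s<n. cf s \<noteq> 0 \<and> psi n u s = cf s *s H s"
    unfolding H0_def by metis
  have f1: "F1 u i \<noteq> 0" if "i < n" for i using cf r1 that unfolding F1_def by simp
  have f2: "F2 u i j \<noteq> 0" if "i < n" "j < n" for i j
    using cf r2 that unfolding F2_def by (simp add: cr_scale pt_def[symmetric])
  have f3: "F3 u i j k \<noteq> 0" if "i < n" "j < n" "k < n" for i j k
    using cf H_det that unfolding F3_def by (simp add: det3_smult)
  show ?thesis
    by (intro exI[of _ u]) (simp add: P_def f1 f2 f3)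
qed

lemma R_nonempty_w:
  assumes mh: "multihom n f" and G: "G \<in> RS" and fG: "f G \<noteq> 0"
  shows "\<exists>w. f (psi n w) \<noteq> 0"
proof -
  obtain d where d: "\<forall>G (c :: nat \<Rightarrow> complex). f (\<lambda>i. c i *s G i) = (\<Prod>i<n. c i ^ d i) * f G"
    using mh unfolding multihom_def by blast
  obtain w where "\<forall>s<n. \<exists>c. c \<noteq> 0 \<and> psi n w s = c *s G s" using lemA[OF G] by blast
  then obtain cf where cf: "\<forall>s<n. cf s \<noteq> 0 \<and> psi n w s = cf s *s G s" by metis
  have "psi n w = (\<lambda>i. cf i *s G i)"
  proof
    fix i show "psi n w i = cf i *s G i"
      using cf psi_ge[of n i w] R_z[OF G, of i] by (cases "i < n") auto
  qed
  hence eq: "f (psi n w) = (\<Prod>i<n. cf i ^ d i) * f G" using d by simp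
  have nz: "(\<Prod>i<n. cf i ^ d i) \<noteq> 0" using cf by simp
  have "f (psi n w) \<noteq> 0" unfolding eq using nz fG by simp
  thus ?thesis by blast
qed

lemma irred: "zariski_irreducible n RS"
  unfolding zariski_irreducible_def
proof (intro conjI allI impI)
  show "RS \<noteq> {}" using H0_R by blast
next
  fix Z1 Z2 assume h: "zariski_closed n Z1 \<and> zariski_closed n Z2 \<and> RS \<subseteq> Z1 \<union> Z2"
  obtain A1 where A1: "\<forall>f\<in>A1. multihom n f" "Z1 = {G \<in> proj_tuples n. \<forall>f\<in>A1. f G = 0}"
    using h unfolding zariski_closed_def by blast
  obtain A2 where A2: "\<forall>f\<in>A2. multihom n f" "Z2 = {G \<in> proj_tuples n. \<forall>f\<in>A2. f G = 0}"
    using h unfolding zariski_closed_def by blast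
  show "RS \<subseteq> Z1 \<or> RS \<subseteq> Z2"
  proof (rule ccontr)
    assume "\<not> (RS \<subseteq> Z1 \<or> RS \<subseteq> Z2)"
    then obtain G1 G2 where G: "G1 \<in> RS" "G1 \<notin> Z1" "G2 \<in> RS" "G2 \<notin> Z2" by blast
    have pt1: "G1 \<in> proj_tuples n" "G2 \<in> proj_tuples n"
      using G by (auto simp: realization_space_def)
    obtain f where f: "f \<in> A1" "f G1 \<noteq> 0" using G(2) pt1 A1(2) by blast
    obtain g where g: "g \<in> A2" "g G2 \<noteq> 0" using G(4) pt1 A2(2) by blast
    obtain w1 where w1: "f (psi n w1) \<noteq> 0" using R_nonempty_w[of f G1] G(1) f(2) A1(1) f(1) by blast
    obtain w2 where w2: "g (psi n w2) \<noteq> 0" using R_nonempty_w[of g G2] G(3) g(2) A2(1) g(1) by blast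
    have pfA: "(\<lambda>v. f (psi n v)) \<in> pf" using A1(1) f(1) pf_polyfun unfolding multihom_def by blast
    have pfB: "(\<lambda>v. g (psi n v)) \<in> pf" using A2(1) g(1) pf_polyfun unfolding multihom_def by blast
    obtain z1 where "f (psi n z1) * g (psi n z1) \<noteq> 0"
      using pf_domain[OF pfA pfB w1 w2] by blast
    moreover obtain u where u: "P u \<noteq> 0" using P_u0 by blast
    moreover have "(\<lambda>v. f (psi n v) * g (psi n v)) \<in> pf" by (rule pf.mult[OF pfA pfB])
    ultimately obtain z where z: "f (psi n z) * g (psi n z) * P z \<noteq> 0"
      using pf_domain[OF _ pf_P, of "\<lambda>v. f (psi n v) * g (psi n v)" z1 u] by auto
    hence "psi n z \<in> RS" using P_ok by auto
    hence "psi n z \<in> Z1 \<or> psi n z \<in> Z2" using h by blast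
    thus False using z f(1) g(1) A1(2) A2(2) by auto
  qed
qed

lemma ic: "inductively_connected n H"
  unfolding inductively_connected_def
proof (intro exI[of _ id] conjI ballI)
  show "bij_betw id {..<n} {..<n}" by simp
next
  fix t assume t: "t \<in> {1..n}"
  have sub: "line_pts (H (id (t - 1))) \<inter> mult_pts (id ` {..<t}) H
      \<subseteq> mult_pts {..<n} H \<inter> line_pts (H (t - 1))"
  proof -
    have "mult_pts {..<t} H \<subseteq> mult_pts {..<n} H"
    proof
      fix x assume "x \<in> mult_pts {..<t} H"
      then obtain p where p: "x = proj_pt p" "p \<noteq> 0" "card {i \<in> {..<t}. on_line p (H i)} \<ge> 3"
        unfolding mult_pts_def by blast
      have "card {i \<in> {..<t}. on_line p (H i)} \<le> card {i \<in> {..<n}. on_line p (H i)}"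
        using t by (intro card_mono) auto
      thus "x \<in> mult_pts {..<n} H" using p unfolding mult_pts_def by force
    qed
    thus ?thesis by auto
  qed
  have "at_most_two (mult_pts {..<n} H \<inter> line_pts (H (t - 1)))" using hyp t by auto
  thus "at_most_two (line_pts (H (id (t - 1))) \<inter> mult_pts (id ` {..<t}) H)"
    using sub unfolding at_most_two_def by (meson card_mono order_trans finite_subset)
qed

end

theorem mainTheorem3:
  fixes n :: nat and H :: "nat \<Rightarrow> complex^3"
  assumes "arrangement n H"
    and "\<forall>i<n. at_most_two (mult_pts {..<n} H \<inter> line_pts (H i))"
  shows "inductively_connected n H \<and>
         zariski_irreducible n (realization_space n (incidence n H))"
proof -
  interpret arr n H using assms by unfold_locales
  show ?thesis using ic irred by blast
qed

end
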